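(* Let $G$ be a graph on $d$ vertices (without loops) with adjacency matrix $A_G$, and assume $G$ is hyperenergetic, i.e. $E(G)\ge 2(d-1)$. For $1\le i\le d$ let $G_i$ be an $r$-regular simple undirected graph with $k$ vertices. Then \[ E(G[G_1,\ldots,G_d])\ge E(G)+\sum_{i=1}^d E(G_i). \]
   Context: The energy $E(H)$ of a graph $H$ is the sum of the absolute values of the eigenvalues (with multiplicity) of its adjacency matrix. For a graph $G$ on vertices $v_1,\ldots,v_d$ and graphs $G_1,\ldots,G_d$, the joined union $G[G_1,\ldots,G_d]$ is obtained from the disjoint union of $G_1,\ldots,G_d$ by joining each vertex of $G_i$ with each vertex of $G_j$ by an edge whenever $v_i$ and $v_j$ are adjacent in $G$; its adjacency matrix has diagonal blocks the adjacency matrices of the $G_i$ and $(i,j)$ off-diagonal block equal to the all-$a_{ij}$ matrix, where $A_G=(a_{ij})$. *)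

theory Defs
  imports "Jordan_Normal_Form.Char_Poly"
begin

definition simple_graph :: "nat \<Rightarrow> (nat \<Rightarrow> nat \<Rightarrow> bool) \<Rightarrow> bool" where
  "simple_graph n E \<longleftrightarrow> (\<forall>i<n. \<forall>j<n. E i j \<longleftrightarrow> E j i) \<and> (\<forall>i<n. \<not> E i i)"

definition regular_graph :: "nat \<Rightarrow> nat \<Rightarrow> (nat \<Rightarrow> nat \<Rightarrow> bool) \<Rightarrow> bool" where
  "regular_graph n r E \<longleftrightarrow> simple_graph n E \<and> (\<forall>i<n. card {j. j < n \<and> E i j} = r)"

definition adj_mat :: "nat \<Rightarrow> (nat \<Rightarrow> nat \<Rightarrow> bool) \<Rightarrow> real mat" where
  "adj_mat n E = mat n n (\<lambda>(i,j). if E i j then 1 else 0)"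

(* Energy of a (real, square) matrix: sum of absolute values of its eigenvalues,
   counted with multiplicity, i.e. of the complex roots of its characteristic polynomial. *)
definition mat_energy :: "real mat \<Rightarrow> real" where
  "mat_energy A = sum_mset (image_mset cmod (proots (char_poly (map_mat complex_of_real A))))"

definition graph_energy :: "nat \<Rightarrow> (nat \<Rightarrow> nat \<Rightarrow> bool) \<Rightarrow> real" where
  "graph_energy n E = mat_energy (adj_mat n E)"

(* Joined union G[G_1,...,G_d], each G_i on k vertices; vertex (i,a) (i<d, a<k) is
   numbered i*k+a. Diagonal blocks: A(G_i); (i,j) off-diagonal block: constant a_ij. *)
definition joined_union_mat ::
  "nat \<Rightarrow> (nat \<Rightarrow> nat \<Rightarrow> bool) \<Rightarrow> nat \<Rightarrow> (nat \<Rightarrow> nat \<Rightarrow> nat \<Rightarrow> bool) \<Rightarrow> real mat" where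
  "joined_union_mat d E k Gs = mat (d*k) (d*k) (\<lambda>(p,q).
     if p div k = q div k then adj_mat k (Gs (p div k)) $$ (p mod k, q mod k)
     else adj_mat d E $$ (p div k, q div k))"

end

theory Submission
  imports Defs "Jordan_Normal_Form.Schur_Decomposition"
begin


lemma char_poly_dim0: "A \<in> carrier_mat 0 0 \<Longrightarrow> char_poly (A :: complex mat) = 1"
  using degree_monic_char_poly[of A 0] by (metis monic_degree_0)

lemma char_poly_lin: "A \<in> carrier_mat n n \<Longrightarrow> \<exists>es. char_poly (A :: complex mat) = (\<Prod>a\<leftarrow>es. [:- a, 1:])"
  using char_poly_factorized by blast

definition bdiag :: "nat \<Rightarrow> nat \<Rightarrow> (nat \<Rightarrow> nat \<Rightarrow> nat \<Rightarrow> complex) \<Rightarrow> complex mat" where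
  "bdiag d m F = mat (d*m) (d*m) (\<lambda>(p,q). if p div m = q div m then F (p div m) (p mod m) (q mod m) else 0)"

lemma bdiag_Suc: "bdiag (Suc d) m F = four_block_mat (mat m m (\<lambda>(a,b). F 0 a b)) (0\<^sub>m m (d*m))
   (0\<^sub>m (d*m) m) (bdiag d m (\<lambda>i. F (Suc i)))"
proof (rule eq_matI)
  fix i j assume i: "i < dim_row (four_block_mat (mat m m (\<lambda>(a,b). F 0 a b)) (0\<^sub>m m (d*m))
   (0\<^sub>m (d*m) m) (bdiag d m (\<lambda>i. F (Suc i))))" and j: "j < dim_col (four_block_mat (mat m m (\<lambda>(a,b). F 0 a b)) (0\<^sub>m m (d*m))
   (0\<^sub>m (d*m) m) (bdiag d m (\<lambda>i. F (Suc i))))"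
  then have i': "i < m + d*m" and j': "j < m + d*m" by (auto simp: bdiag_def)
  show "bdiag (Suc d) m F $$ (i, j) = four_block_mat (mat m m (\<lambda>(a,b). F 0 a b)) (0\<^sub>m m (d*m))
   (0\<^sub>m (d*m) m) (bdiag d m (\<lambda>i. F (Suc i))) $$ (i, j)"
  proof -
    have m: "m > 0" using i' by (cases m) auto
    show ?thesis
      using i' j' m
      by (auto simp: bdiag_def le_div_geq le_mod_geq not_less)
  qed
qed (auto simp: bdiag_def)

lemma bdiag_carrier[simp]: "bdiag d m F \<in> carrier_mat (d*m) (d*m)"
  by (simp add: bdiag_def)

lemma bdiag_dims[simp]: "dim_row (bdiag d m F) = d*m" "dim_col (bdiag d m F) = d*m"
  by (simp_all add: bdiag_def)

lemma bdiag_char_poly: "char_poly (bdiag d m F) = (\<Prod>i<d. char_poly (mat m m (\<lambda>(a,b). F i a b)))"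
proof (induction d arbitrary: F)
  case 0
  then show ?case using char_poly_dim0[of "bdiag 0 m F"] bdiag_carrier[of 0 m F] by simp
next
  case (Suc d)
  have "char_poly (bdiag (Suc d) m F) = char_poly (mat m m (\<lambda>(a,b). F 0 a b)) * char_poly (bdiag d m (\<lambda>i. F (Suc i)))"
    unfolding bdiag_Suc
    by (rule char_poly_0_block[OF refl], rule char_poly_lin[of _ m], simp, rule char_poly_lin[of _ "d*m"], auto)
  then show ?case using Suc.IH by (simp add: prod.lessThan_Suc_shift del: prod.lessThan_Suc)
qed



lemma block_sum:
  assumes "s < d" "0 < (k::nat)"
  shows "(\<Sum>q\<in>{0..<d*k}. if q div k = s then f q else 0) = (\<Sum>b<k. f (s*k+b))"
proof -
  have "(\<Sum>q\<in>{0..<d*k}. if q div k = s then f q else 0) = sum f {q\<in>{0..<d*k}. q div k = s}"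
    by (rule sum.inter_filter[symmetric]) simp
  also have "{q\<in>{0..<d*k}. q div k = s} = (\<lambda>b. s*k+b) ` {..<k}" (is "?L = ?R")
  proof
    show "?L \<subseteq> ?R"
    proof
      fix q assume "q \<in> ?L"
      then have "q div k = s" by simp
      then have "q = s*k + q mod k" by (metis div_mult_mod_eq add.commute)
      moreover have "q mod k < k" using assms by simp
      ultimately show "q \<in> ?R" by blast
    qed
    show "?R \<subseteq> ?L"
    proof
      fix q assume "q \<in> ?R"
      then obtain b where b: "b < k" and q: "q = s*k+b" by auto
      have "(s+1)*k \<le> d*k" using assms by (intro mult_right_mono) auto
      then have "s*k+b < d*k" using b by (simp add: algebra_simps)
      moreover have "(s*k+b) div k = s" using assms b by simp
      ultimately show "q \<in> ?L" using q by simp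
    qed
  qed
  also have "sum f ((\<lambda>b. s*k+b) ` {..<k}) = (\<Sum>b<k. f (s*k+b))"
    by (simp add: sum.reindex inj_on_def)
  finally show ?thesis .
qed

lemma dm: "b < (k::nat) \<Longrightarrow> (a*k+b) div k = a \<and> (a*k+b) mod k = b"
proof -
  assume b: "b < k"
  then have k: "k > 0" by simp
  have "(a*k+b) div k = (b + a*k) div k" by (simp add: add.commute)
  also have "\<dots> = a" using b k by simp
  finally show ?thesis using b k by (simp add: add.commute)
qed

lemma joined_char_poly:
  fixes D :: "nat \<Rightarrow> nat \<Rightarrow> nat \<Rightarrow> complex" and c :: "nat \<Rightarrow> nat \<Rightarrow> complex" and r :: complex
  assumes k: "k \<ge> 1" and rows: "\<And>i a. i < d \<Longrightarrow> a < k \<Longrightarrow> (\<Sum>b<k. D i a b) = r"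
  defines "M \<equiv> mat (d*k) (d*k) (\<lambda>(p,q). if p div k = q div k then D (p div k) (p mod k) (q mod k) else c (p div k) (q div k))"
  shows "char_poly M = char_poly (mat d d (\<lambda>(i,j). if i = j then r else of_nat k * c i j))
     * char_poly (bdiag d (k-1) (\<lambda>i a b. D i (a+1) (b+1) - D i 0 (b+1)))"
proof -
  define m where "m = k - 1"
  define n where "n = d*k"
  have km: "k = m + 1" using k by (simp add: m_def)
  have nm: "n = d + d*m" by (simp add: n_def km algebra_simps)
  define ix where "ix u = (u div m)*k + (u mod m + 1)" for u
  have ixp: "ix u < n \<and> ix u div k = u div m \<and> ix u mod k = u mod m + 1 \<and> u div m < d" if u: "u < d*m" for u
  proof -
    have m0: "m > 0" using u by (cases m) auto
    have lt: "u mod m + 1 < k" using m0 km by simp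
    have ud: "u div m < d" using u by (simp add: less_mult_imp_div_less)
    have "(u div m + 1)*k \<le> d*k" using ud by (intro mult_right_mono) auto
    then have "ix u < n" using lt by (simp add: ix_def n_def algebra_simps)
    moreover have "ix u div k = u div m" unfolding ix_def by (rule dm[OF lt, THEN conjunct1])
    moreover have "ix u mod k = u mod m + 1" unfolding ix_def by (rule dm[OF lt, THEN conjunct2])
    ultimately show ?thesis using ud by simp
  qed
  have ixinj: "u = v" if "u < d*m" "v < d*m" "ix u = ix v" for u v
  proof -
    from ixp[OF that(1)] ixp[OF that(2)] that(3)
    have "u div m = v div m" "u mod m = v mod m" by simp_all
    then show ?thesis by (metis div_mult_mod_eq)
  qed
  have blk: "(u div m)*k < n \<and> ((u div m)*k) div k = u div m \<and> ((u div m)*k) mod k = 0" if u: "u < d*m" for u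
  proof -
    have ud: "u div m < d" using ixp[OF u] by simp
    then have "(u div m + 1)*k \<le> d*k" by (intro mult_right_mono) auto
    then show ?thesis using k ud by (simp add: n_def algebra_simps)
  qed
  have tkn: "t*k < n" if t: "t < d" for t
  proof -
    have "(t+1)*k \<le> d*k" using t by (intro mult_right_mono) auto
    then show ?thesis using k t by (simp add: n_def algebra_simps)
  qed
  define S where "S = mat n n (\<lambda>(p,t). if t < d then (if p div k = t then 1 else 0)
     else (if p = ix (t-d) then 1 else (0::complex)))"
  define T where "T = mat n n (\<lambda>(t,p). if t < d then (if p = t*k then 1 else 0)
     else (if p = ix (t-d) then 1 else 0) - (if p = ((t-d) div m)*k then 1 else (0::complex)))"
  define X where "X = mat d d (\<lambda>(i,j). if i = j then r else of_nat k * c i j)"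
  define Z where "Z = bdiag d m (\<lambda>i a b. D i (a+1) (b+1) - D i 0 (b+1))"
  define Y where "Y = mat d (d*m) (\<lambda>(i,u). M $$ (i*k, ix u))"
  define B where "B = four_block_mat X Y (0\<^sub>m (d*m) d) Z"
  have M: "M \<in> carrier_mat n n" by (simp add: M_def n_def)
  have S: "S \<in> carrier_mat n n" by (simp add: S_def)
  have T: "T \<in> carrier_mat n n" by (simp add: T_def)
  have B: "B \<in> carrier_mat n n" by (simp add: B_def X_def Y_def Z_def nm)
  have Tmult: "(T * A) $$ (t,s) = (if t < d then A $$ (t*k, s)
      else A $$ (ix (t-d), s) - A $$ (((t-d) div m)*k, s))"
    if A: "A \<in> carrier_mat n n" and t: "t < n" and s: "s < n" for A t s
  proof -
    have "(T * A) $$ (t,s) = (\<Sum>p=0..<n. T $$ (t,p) * A $$ (p,s))"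
      using A t s T by (simp add: scalar_prod_def)
    also have "\<dots> = (if t < d then A $$ (t*k, s)
      else A $$ (ix (t-d), s) - A $$ (((t-d) div m)*k, s))"
    proof (cases "t < d")
      case True
      have "(t+1)*k \<le> d*k" using True by (intro mult_right_mono) auto
      then have tk: "t*k < n" using k True by (simp add: n_def algebra_simps)
      have "(\<Sum>p=0..<n. T $$ (t,p) * A $$ (p,s)) = (\<Sum>p=0..<n. if p = t*k then A $$ (p,s) else 0)"
        using t True by (intro sum.cong) (auto simp: T_def)
      also have "\<dots> = A $$ (t*k, s)" using tk by simp
      finally show ?thesis using True by simp
    next
      case False
      then have u: "t - d < d*m" using t nm by simp
      have "(\<Sum>p=0..<n. T $$ (t,p) * A $$ (p,s)) = (\<Sum>p=0..<n. (if p = ix (t-d) then A $$ (p,s) else 0)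
         - (if p = ((t-d) div m)*k then A $$ (p,s) else 0))"
        using t False by (intro sum.cong) (auto simp: T_def)
      also have "\<dots> = A $$ (ix (t-d), s) - A $$ (((t-d) div m)*k, s)"
        using ixp[OF u] blk[OF u] by (simp add: sum_subtractf)
      finally show ?thesis using False by simp
    qed
    finally show ?thesis .
  qed
  have MS: "(M * S) $$ (p,s) = (if s < d then (if p div k = s then r else of_nat k * c (p div k) s)
      else M $$ (p, ix (s-d)))" if p: "p < n" and s: "s < n" for p s
  proof -
    have "(M * S) $$ (p,s) = (\<Sum>q=0..<n. M $$ (p,q) * S $$ (q,s))"
      using M S p s by (simp add: scalar_prod_def)
    also have "\<dots> = (if s < d then (if p div k = s then r else of_nat k * c (p div k) s)
      else M $$ (p, ix (s-d)))"
    proof (cases "s < d")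
      case True
      have pd: "p div k < d" using p by (simp add: n_def less_mult_imp_div_less)
      have pk: "p mod k < k" using k by simp
      have "(\<Sum>q=0..<n. M $$ (p,q) * S $$ (q,s)) = (\<Sum>q=0..<d*k. if q div k = s then M $$ (p,q) else 0)"
        using s True by (intro sum.cong) (auto simp: S_def n_def)
      also have "\<dots> = (\<Sum>b<k. M $$ (p, s*k+b))" using True k by (intro block_sum) auto
      also have "\<dots> = (\<Sum>b<k. if p div k = s then D (p div k) (p mod k) b else c (p div k) s)"
      proof (rule sum.cong[OF refl])
        fix b assume b: "b \<in> {..<k}"
        have "(s+1)*k \<le> d*k" using True by (intro mult_right_mono) auto
        then have "s*k+b < d*k" using b by (simp add: algebra_simps)
        moreover have "(s*k+b) div k = s" "(s*k+b) mod k = b" using dm[of b k s] b by auto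
        ultimately show "M $$ (p, s*k+b) = (if p div k = s then D (p div k) (p mod k) b else c (p div k) s)"
          using p by (simp add: M_def n_def)
      qed
      also have "\<dots> = (if p div k = s then r else of_nat k * c (p div k) s)"
        using rows[OF pd pk] by auto
      finally show ?thesis using True by simp
    next
      case False
      then have u: "s - d < d*m" using s nm by simp
      have "(\<Sum>q=0..<n. M $$ (p,q) * S $$ (q,s)) = (\<Sum>q=0..<n. if q = ix (s-d) then M $$ (p,q) else 0)"
        using s False by (intro sum.cong) (auto simp: S_def)
      also have "\<dots> = M $$ (p, ix (s-d))" using ixp[OF u] by simp
      finally show ?thesis using False by simp
    qed
    finally show ?thesis .
  qed
  have TS: "T * S = 1\<^sub>m n"
  proof (rule eq_matI)
    fix t s assume "t < dim_row (1\<^sub>m n :: complex mat)" "s < dim_col (1\<^sub>m n :: complex mat)"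
    then have t: "t < n" and s: "s < n" by auto
    show "(T * S) $$ (t,s) = 1\<^sub>m n $$ (t,s)"
    proof (cases "t < d")
      case True
      have tk: "(t*k) div k = t" using k by simp
      note tkT = tkn[OF True]
      show ?thesis
      proof (cases "s < d")
        case True2: True
        then show ?thesis using Tmult[OF S t s] True tk t s tkT by (auto simp: S_def)
      next
        case False
        then have v: "s - d < d*m" using s nm by simp
        have "t*k \<noteq> ix (s-d)"
        proof
          assume "t*k = ix (s-d)"
          then have "(t*k) mod k = (s-d) mod m + 1" using ixp[OF v] by simp
          then show False by simp
        qed
        then show ?thesis using Tmult[OF S t s] True False t s tkT by (auto simp: S_def)
      qed
    next
      case False
      then have u: "t - d < d*m" using t nm by simp
      show ?thesis
      proof (cases "s < d")
        case True
        then show ?thesis using Tmult[OF S t s] False t s ixp[OF u] blk[OF u] by (auto simp: S_def)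
      next
        case False2: False
        then have v: "s - d < d*m" using s nm by simp
        have ne: "(t - d) div m * k \<noteq> ix (s-d)"
        proof
          assume "(t - d) div m * k = ix (s-d)"
          then have "((t - d) div m * k) mod k = (s-d) mod m + 1" using ixp[OF v] by simp
          then show False by simp
        qed
        have "(ix (t-d) = ix (s-d)) = (t = s)" using ixinj[OF u v] False False2 by auto
        then show ?thesis using Tmult[OF S t s] False False2 t s ne ixp[OF u] blk[OF u] by (auto simp: S_def)
      qed
    qed
  qed (auto simp: T_def S_def)
  have ST: "S * T = 1\<^sub>m n" by (rule mat_mult_left_right_inverse[OF T S TS])
  have MSc: "M * S \<in> carrier_mat n n" using M S by simp
  have BTMS: "B = T * M * S"
  proof -
    have "T * M * S = T * (M * S)" using T M S by (simp add: assoc_mult_mat)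
    moreover have "B = T * (M * S)"
    proof (rule eq_matI)
      fix t s assume "t < dim_row (T * (M * S))" "s < dim_col (T * (M * S))"
      then have t: "t < n" and s: "s < n" using T S by auto
      have TMS: "(T * (M * S)) $$ (t,s) = (if t < d then (M * S) $$ (t*k, s)
        else (M * S) $$ (ix (t-d), s) - (M * S) $$ (((t-d) div m)*k, s))"
        by (rule Tmult[OF MSc t s])
      show "B $$ (t,s) = (T * (M * S)) $$ (t,s)"
      proof (cases "t < d")
        case True
        have tk: "(t*k) div k = t" using k by simp
        note tkT = tkn[OF True]
        show ?thesis
        proof (cases "s < d")
          case True2: True
          then show ?thesis using TMS MS[OF tkT s] True tk t s
            by (simp add: B_def X_def Y_def Z_def nm)
        next
          case False
          then show ?thesis using TMS MS[OF tkT s] True tk t s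
            by (simp add: B_def X_def Y_def Z_def nm)
        qed
      next
        case False
        then have u: "t - d < d*m" using t nm by simp
        have ixu: "ix (t-d) < n" using ixp[OF u] by simp
        have bu: "(t - d) div m * k < n" using blk[OF u] by simp
        show ?thesis
        proof (cases "s < d")
          case True
          then show ?thesis using TMS MS[OF ixu s] MS[OF bu s] False t s ixp[OF u] blk[OF u]
            by (simp add: B_def X_def Y_def Z_def nm)
        next
          case False2: False
          then have v: "s - d < d*m" using s nm by simp
          have "(M * S) $$ (ix (t-d), s) - (M * S) $$ (((t-d) div m)*k, s)
            = M $$ (ix (t-d), ix (s-d)) - M $$ (((t-d) div m)*k, ix (s-d))"
            using MS[OF ixu s] MS[OF bu s] False2 by simp
          also have "\<dots> = Z $$ (t - d, s - d)"
            using ixp[OF u] blk[OF u] ixp[OF v] u v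
            by (simp add: M_def Z_def bdiag_def n_def)
          finally show ?thesis using TMS False False2 t s
            by (simp add: B_def X_def Y_def nm Z_def)
        qed
      qed
    qed (auto simp: B_def X_def Z_def T_def S_def nm)
    ultimately show ?thesis by simp
  qed
  have "similar_mat_wit B M T S"
    unfolding similar_mat_wit_def Let_def using B M S T TS ST BTMS by auto
  then have "char_poly B = char_poly M" 
    by (intro char_poly_similar) (auto simp: similar_mat_def)
  moreover have "char_poly B = char_poly X * char_poly Z"
    by (rule char_poly_0_block[OF B_def], rule char_poly_lin[of _ d], simp add: X_def,
      rule char_poly_lin[of _ "d*m"], auto simp: X_def Y_def Z_def)
  ultimately show ?thesis by (simp add: X_def Z_def m_def)
qed



lemma real_eig:
  fixes A :: "complex mat"
  assumes A: "A \<in> carrier_mat n n" and re: "\<And>i j. i<n \<Longrightarrow> j<n \<Longrightarrow> Im (A$$(i,j)) = 0"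
    and sym: "\<And>i j. i<n \<Longrightarrow> j<n \<Longrightarrow> A$$(i,j) = A$$(j,i)"
    and root: "poly (char_poly A) e = 0"
  shows "Im e = 0"
proof -
  have "eigenvalue A e" using eigenvalue_root_char_poly[OF A] root by simp
  then obtain v where v: "v \<in> carrier_vec n" "v \<noteq> 0\<^sub>v n" "A *\<^sub>v v = e \<cdot>\<^sub>v v"
    unfolding eigenvalue_def eigenvector_def using A by auto
  have Av: "(\<Sum>j<n. A$$(i,j) * v$j) = e * v$i" if i: "i < n" for i
  proof -
    have "(A *\<^sub>v v) $ i = (\<Sum>j<n. A$$(i,j) * v$j)"
      using A v(1) i by (simp add: scalar_prod_def atLeast0LessThan)
    moreover have "(e \<cdot>\<^sub>v v) $ i = e * v$i" using v i by simp
    ultimately show ?thesis using v(3) by simp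
  qed
  define s where "s = (\<Sum>i<n. cnj (v$i) * (\<Sum>j<n. A$$(i,j) * v$j))"
  define N where "N = (\<Sum>i<n. cnj (v$i) * v$i)"
  have s1: "s = e * N" unfolding s_def N_def
    by (simp add: Av sum_distrib_left mult.assoc mult.left_commute)
  have cA: "cnj (A$$(i,j)) = A$$(i,j)" if "i<n" "j<n" for i j
    using re[OF that] by (simp add: complex_eq_iff)
  have "cnj s = (\<Sum>i<n. \<Sum>j<n. v$i * A$$(i,j) * cnj (v$j))"
    unfolding s_def by (simp add: sum_distrib_left cA mult.assoc mult.left_commute mult.commute)
  also have "\<dots> = (\<Sum>j<n. \<Sum>i<n. v$i * A$$(i,j) * cnj (v$j))" by (rule sum.swap)
  also have "\<dots> = (\<Sum>j<n. \<Sum>i<n. cnj (v$j) * A$$(j,i) * v$i)"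
    by (intro sum.cong refl) (simp add: sym mult.commute mult.left_commute)
  also have "\<dots> = s" unfolding s_def by (simp add: sum_distrib_left mult.assoc)
  finally have "cnj s = s" .
  then have ims: "Im s = 0" by (simp add: complex_eq_iff)
  have Nr: "N = complex_of_real (\<Sum>i<n. (cmod (v$i))^2)"
    unfolding N_def of_real_sum by (intro sum.cong refl) (simp add: complex_norm_square[symmetric] mult.commute del: of_real_power)
  obtain i where i: "i < n" "v$i \<noteq> 0"
  proof -
    have "\<exists>i<n. v$i \<noteq> 0"
    proof (rule ccontr)
      assume "\<not> ?thesis"
      then have "v = 0\<^sub>v n" using v(1) by (intro eq_vecI) auto
      then show False using v(2) by simp
    qed
    then show ?thesis using that by blast
  qed
  have "(\<Sum>i<n. (cmod (v$i))^2) \<ge> (cmod (v$i))^2"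
    by (rule member_le_sum) (use i in auto)
  moreover have "(cmod (v$i))^2 > 0" using i by simp
  ultimately have pos: "(\<Sum>i<n. (cmod (v$i))^2) > 0" by linarith
  have "Im s = Im e * (\<Sum>i<n. (cmod (v$i))^2)" unfolding s1 Nr by simp
  then show ?thesis using ims pos by simp
qed



lemma tr_comm:
  fixes A B :: "'a::comm_ring_1 mat"
  assumes A: "A \<in> carrier_mat n m" and B: "B \<in> carrier_mat m n"
  shows "(\<Sum>i<n. (A*B)$$(i,i)) = (\<Sum>j<m. (B*A)$$(j,j))"
proof -
  have "(\<Sum>i<n. (A*B)$$(i,i)) = (\<Sum>i<n. \<Sum>j<m. A$$(i,j) * B$$(j,i))"
    using A B by (intro sum.cong refl) (simp add: scalar_prod_def atLeast0LessThan)
  also have "\<dots> = (\<Sum>j<m. \<Sum>i<n. B$$(j,i) * A$$(i,j))"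
    by (subst sum.swap) (simp add: mult.commute)
  also have "\<dots> = (\<Sum>j<m. (B*A)$$(j,j))"
    using A B by (intro sum.cong refl) (simp add: scalar_prod_def atLeast0LessThan)
  finally show ?thesis .
qed

lemma shift_char_poly:
  fixes A :: "complex mat"
  assumes A: "A \<in> carrier_mat n n" and cp: "char_poly A = (\<Prod>a\<leftarrow>es. [:-a,1:])"
  shows "char_poly (r \<cdot>\<^sub>m 1\<^sub>m n + \<kappa> \<cdot>\<^sub>m A) = (\<Prod>a\<leftarrow>es. [:-(r + \<kappa>*a),1:])"
    and "sum_list es = (\<Sum>i<n. A$$(i,i))"
proof -
  obtain Bt P Q where sd: "schur_decomposition A es = (Bt,P,Q)" by (cases "schur_decomposition A es") auto
  from schur_decomposition[OF A cp sd]
  have sim: "similar_mat_wit A Bt P Q" and ut: "upper_triangular Bt" and dg: "diag_mat Bt = es" by auto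
  from sim A have Bt: "Bt \<in> carrier_mat n n" and P: "P \<in> carrier_mat n n" and Q: "Q \<in> carrier_mat n n"
    and PQ: "P * Q = 1\<^sub>m n" and QP: "Q * P = 1\<^sub>m n" and APBQ: "A = P * Bt * Q"
    unfolding similar_mat_wit_def Let_def by auto
  define C where "C = r \<cdot>\<^sub>m 1\<^sub>m n + \<kappa> \<cdot>\<^sub>m Bt"
  have C: "C \<in> carrier_mat n n" using Bt by (simp add: C_def)
  have "P * C * Q = r \<cdot>\<^sub>m 1\<^sub>m n + \<kappa> \<cdot>\<^sub>m A"
  proof -
    have "P * C = r \<cdot>\<^sub>m P + \<kappa> \<cdot>\<^sub>m (P * Bt)"
    proof -
      have "P * C = P * (r \<cdot>\<^sub>m 1\<^sub>m n) + P * (\<kappa> \<cdot>\<^sub>m Bt)"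
        unfolding C_def by (rule mult_add_distrib_mat[OF P]) (use Bt in auto)
      also have "P * (r \<cdot>\<^sub>m 1\<^sub>m n) = r \<cdot>\<^sub>m (P * 1\<^sub>m n)" by (rule mult_smult_distrib[OF P]) auto
      also have "P * (\<kappa> \<cdot>\<^sub>m Bt) = \<kappa> \<cdot>\<^sub>m (P * Bt)" by (rule mult_smult_distrib[OF P Bt])
      finally show ?thesis using P by simp
    qed
    then have "P * C * Q = (r \<cdot>\<^sub>m P + \<kappa> \<cdot>\<^sub>m (P * Bt)) * Q" by simp
    also have "\<dots> = r \<cdot>\<^sub>m (P * Q) + \<kappa> \<cdot>\<^sub>m (P * Bt * Q)"
    proof -
      have "(r \<cdot>\<^sub>m P + \<kappa> \<cdot>\<^sub>m (P * Bt)) * Q = (r \<cdot>\<^sub>m P) * Q + (\<kappa> \<cdot>\<^sub>m (P * Bt)) * Q"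
        by (rule add_mult_distrib_mat[OF _ _ Q]) (use P Bt in auto)
      also have "(r \<cdot>\<^sub>m P) * Q = r \<cdot>\<^sub>m (P * Q)" by (rule mult_smult_assoc_mat[OF P Q])
      also have "(\<kappa> \<cdot>\<^sub>m (P * Bt)) * Q = \<kappa> \<cdot>\<^sub>m (P * Bt * Q)" by (rule mult_smult_assoc_mat[OF _ Q]) (use P Bt in auto)
      finally show ?thesis .
    qed
    also have "\<dots> = r \<cdot>\<^sub>m 1\<^sub>m n + \<kappa> \<cdot>\<^sub>m A" using PQ APBQ by simp
    finally show ?thesis .
  qed
  then have "similar_mat_wit (r \<cdot>\<^sub>m 1\<^sub>m n + \<kappa> \<cdot>\<^sub>m A) C P Q"
    unfolding similar_mat_wit_def Let_def using P Q C PQ QP A by auto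
  then have "char_poly (r \<cdot>\<^sub>m 1\<^sub>m n + \<kappa> \<cdot>\<^sub>m A) = char_poly C"
    by (intro char_poly_similar) (auto simp: similar_mat_def)
  also have "\<dots> = (\<Prod>a\<leftarrow>diag_mat C. [:-a,1:])"
  proof (rule char_poly_upper_triangular[OF C])
    show "upper_triangular C" using ut Bt unfolding upper_triangular_def C_def by auto
  qed
  also have "diag_mat C = map (\<lambda>a. r + \<kappa>*a) es"
    using dg Bt unfolding C_def diag_mat_def by auto
  finally show "char_poly (r \<cdot>\<^sub>m 1\<^sub>m n + \<kappa> \<cdot>\<^sub>m A) = (\<Prod>a\<leftarrow>es. [:-(r + \<kappa>*a),1:])"
    by (simp add: comp_def)
  have "sum_list es = (\<Sum>i<n. Bt$$(i,i))"
    unfolding dg[symmetric] diag_mat_def using Bt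
    by (simp add: sum_list_map_eq_sum_count atLeast0LessThan[symmetric] sum.list_conv_set_nth)
  also have "\<dots> = (\<Sum>i<n. ((Q * P) * Bt)$$(i,i))" using QP Bt by simp
  also have "\<dots> = (\<Sum>i<n. (Q * (P * Bt))$$(i,i))" using Q P Bt by (simp add: assoc_mult_mat[of _ n n _ n _ n])
  also have "\<dots> = (\<Sum>i<n. ((P * Bt) * Q)$$(i,i))" using Q P Bt by (intro tr_comm) auto
  also have "\<dots> = (\<Sum>i<n. A$$(i,i))" using APBQ by simp
  finally show "sum_list es = (\<Sum>i<n. A$$(i,i))" .
qed

lemma ineq_aux:
  fixes ls :: "real list" and r k :: real
  assumes "k \<ge> 0" "r \<ge> 0"
  shows "(\<Sum>l\<leftarrow>ls. \<bar>r + k*l\<bar>) \<ge> k * (\<Sum>l\<leftarrow>ls. \<bar>l\<bar>) + r * length ls - 2*r*length (filter (\<lambda>l. l<0) ls)"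
proof (induction ls)
  case Nil
  then show ?case by simp
next
  case (Cons l ls)
  have el: "\<bar>r + k*l\<bar> \<ge> k*\<bar>l\<bar> + r - (if l < 0 then 2*r else 0)"
  proof (cases "l < 0")
    case True
    then have "\<bar>l\<bar> = -l" by simp
    then show ?thesis using True by (simp add: abs_if)
  next
    case False
    then have "k*l \<ge> 0" using assms by simp
    then show ?thesis using False assms by simp
  qed
  show ?case using Cons.IH el by (simp add: algebra_simps split: if_splits)
qed

lemma key_ineq:
  fixes ls :: "real list" and r k :: real
  assumes s0: "sum_list ls = 0" and E: "(\<Sum>l\<leftarrow>ls. \<bar>l\<bar>) \<ge> 2*(real (length ls) - 1)"
    and k: "k \<ge> 1" and r: "0 \<le> r" "r \<le> k - 1"
  shows "(\<Sum>l\<leftarrow>ls. \<bar>r + k*l\<bar>) \<ge> (\<Sum>l\<leftarrow>ls. \<bar>l\<bar>) + real (length ls) * r"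
proof (cases "ls = []")
  case True
  then show ?thesis by simp
next
  case False
  define neg where "neg = length (filter (\<lambda>l. l<0) ls)"
  define Sa where "Sa = (\<Sum>l\<leftarrow>ls. \<bar>l\<bar>)"
  define L where "L = length ls"
  have aux: "(\<Sum>l\<leftarrow>ls. \<bar>r + k*l\<bar>) \<ge> k * Sa + r * L - 2*r*neg"
    unfolding neg_def Sa_def L_def using ineq_aux[of k r ls] k r by simp
  have "neg < L"
  proof (rule ccontr)
    assume "\<not> neg < L"
    then have all: "\<forall>l\<in>set ls. l < 0"
      using length_filter_less[of _ ls "\<lambda>l. l<0"] unfolding neg_def L_def by force
    have "sum_list ls < 0" using all False
    proof (induction ls)
      case Nil then show ?case by simp
    next
      case (Cons a ls)
      then show ?case by (cases "ls = []") auto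
    qed
    then show False using s0 by simp
  qed
  then have negL: "real neg \<le> real L - 1" by linarith
  have L1: "real L \<ge> 1" using False unfolding L_def by (cases ls) auto
  have E': "Sa \<ge> 2*(real L - 1)" using E unfolding Sa_def L_def by simp
  have "(k - 1) * Sa \<ge> (k - 1) * (2*(real L - 1))" using E' k by (intro mult_left_mono) auto
  moreover have "(k - 1) * (2*(real L - 1)) \<ge> r * (2*(real L - 1))" using r L1 by (intro mult_right_mono) auto
  moreover have "r * (2*(real L - 1)) \<ge> r * (2 * neg)" using negL r by (intro mult_left_mono) auto
  ultimately have "(k - 1) * Sa \<ge> 2 * r * neg" by linarith
  then show ?thesis using aux unfolding Sa_def[symmetric] L_def[symmetric] by (simp add: algebra_simps)
qed



definition en :: "complex poly \<Rightarrow> real" where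
  "en p = sum_mset (image_mset cmod (proots p))"

lemma en_mult: "p \<noteq> 0 \<Longrightarrow> q \<noteq> 0 \<Longrightarrow> en (p*q) = en p + en q"
  by (simp add: en_def proots_mult)

lemma en_prod: "finite I \<Longrightarrow> (\<And>i. i \<in> I \<Longrightarrow> f i \<noteq> 0) \<Longrightarrow> en (\<Prod>i\<in>I. f i) = (\<Sum>i\<in>I. en (f i))"
proof (induction I rule: finite_induct)
  case empty
  then show ?case by (simp add: en_def)
next
  case (insert x F)
  have "(\<Prod>i\<in>F. f i) \<noteq> 0" using insert by (simp add: prod_zero_iff)
  then show ?case using insert by (simp add: en_mult)
qed

lemma proots_lin: "proots (\<Prod>a\<leftarrow>es. [:-a,1:]) = mset (es :: complex list)"
proof (induction es)
  case Nil
  then show ?case by simp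
next
  case (Cons a es)
  have "(\<Prod>a\<leftarrow>es. [:-a,1:]) \<noteq> (0 :: complex poly)"
    by (auto simp: prod_list_zero_iff)
  note nz = this
  have "proots (\<Prod>x\<leftarrow>a#es. [:-x,1:]) = proots ([:-a,1:] * (\<Prod>x\<leftarrow>es. [:-x,1:]))" by simp
  also have "\<dots> = proots [:-a,1:] + proots (\<Prod>x\<leftarrow>es. [:-x,1:])"
    by (rule proots_mult) (use nz in auto)
  also have "\<dots> = {#a#} + mset es" using Cons.IH proots_linear_factor[of "-a"] by simp
  finally show ?case by simp
qed

lemma en_lin: "en (\<Prod>a\<leftarrow>es. [:-a,1:]) = (\<Sum>a\<leftarrow>es. cmod a)"
  by (simp add: en_def proots_lin mset_map[symmetric] sum_mset_sum_list del: mset_map)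

lemma cp_nz: "A \<in> carrier_mat n n \<Longrightarrow> char_poly (A::complex mat) \<noteq> 0"
  using degree_monic_char_poly[of A n] by auto

lemma mat_energy_en: "mat_energy A = en (char_poly (map_mat complex_of_real A))"
  by (simp add: mat_energy_def en_def)



lemma cp_1x1: "char_poly (mat 1 1 (\<lambda>(i,j). if i = j then (x::complex) else y i j)) = [:-x,1:]"
proof -
  have "char_poly (mat 1 1 (\<lambda>(i,j). if i = j then (x::complex) else y i j))
     = (\<Prod>a\<leftarrow>diag_mat (mat 1 1 (\<lambda>(i,j). if i = j then (x::complex) else y i j)). [:-a,1:])"
    by (rule char_poly_upper_triangular[of _ 1]) (auto simp: upper_triangular_def)
  also have "diag_mat (mat 1 1 (\<lambda>(i,j). if i = j then (x::complex) else y i j)) = [x]"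
    by (simp add: diag_mat_def)
  finally show ?thesis by simp
qed

lemma sum_ind: "(\<Sum>b<(k::nat). if P b then 1 else (0::complex)) = of_nat (card {b. b < k \<and> P b})"
proof -
  have "(\<Sum>b<k. if P b then 1 else (0::complex)) = (\<Sum>b\<in>{b\<in>{..<k}. P b}. 1)"
    by (rule sum.inter_filter[symmetric]) simp
  also have "\<dots> = of_nat (card {b. b < k \<and> P b})" by simp
  finally show ?thesis .
qed

theorem mainTheorem10:
  fixes d k r :: nat and E :: "nat \<Rightarrow> nat \<Rightarrow> bool"
    and Gs :: "nat \<Rightarrow> nat \<Rightarrow> nat \<Rightarrow> bool"
  assumes "simple_graph d E"
    and "graph_energy d E \<ge> 2 * (real d - 1)"
    and "k \<ge> 1"
    and "\<And>i. i < d \<Longrightarrow> regular_graph k r (Gs i)"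
  shows "mat_energy (joined_union_mat d E k Gs)
           \<ge> graph_energy d E + (\<Sum>i<d. graph_energy k (Gs i))"
proof (cases "d = 0")
  case True
  have "char_poly (map_mat complex_of_real (joined_union_mat d E k Gs)) = 1"
    by (rule char_poly_dim0) (simp add: joined_union_mat_def True)
  moreover have "char_poly (map_mat complex_of_real (adj_mat d E)) = 1"
    by (rule char_poly_dim0) (simp add: adj_mat_def True)
  ultimately show ?thesis using True
    by (simp add: mat_energy_en graph_energy_def en_def)
next
  case False
  then have d0: "d > 0" by simp
  note simp_E = assms(1)[unfolded simple_graph_def]
  have k0: "k > 0" using assms(3) by simp
  have rk: "r \<le> k - 1"
  proof -
    have "regular_graph k r (Gs 0)" using assms(4) d0 by simp
    then have c: "card {j. j < k \<and> Gs 0 0 j} = r" and nl: "\<not> Gs 0 0 0"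
      using k0 unfolding regular_graph_def simple_graph_def by auto
    have "{j. j < k \<and> Gs 0 0 j} \<subseteq> {..<k} - {0}" using nl by auto
    then have "card {j. j < k \<and> Gs 0 0 j} \<le> card ({..<k} - {0})" by (intro card_mono) auto
    also have "\<dots> = k - 1" using k0 by simp
    finally show ?thesis using c by simp
  qed
  define Dc where "Dc i a b = (if Gs i a b then 1 else (0::complex))" for i a b
  define cc where "cc i j = (if E i j then 1 else (0::complex))" for i j
  define F where "F i a b = Dc i (a+1) (b+1) - Dc i 0 (b+1)" for i a b
  define m where "m = k - 1"
  define C where "C i = mat m m (\<lambda>(a,b). F i a b)" for i
  have rows: "(\<Sum>b<k. Dc i a b) = of_nat r" if "i < d" "a < k" for i a
  proof -
    have "card {j. j < k \<and> Gs i a j} = r" using assms(4)[OF that(1)] that(2)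
      unfolding regular_graph_def by auto
    then show ?thesis unfolding Dc_def by (simp add: sum_ind)
  qed
  define J where "J = map_mat complex_of_real (joined_union_mat d E k Gs)"
  have Jeq: "J = mat (d*k) (d*k) (\<lambda>(p,q). if p div k = q div k then Dc (p div k) (p mod k) (q mod k) else cc (p div k) (q div k))"
  proof (rule eq_matI)
    fix p q assume "p < dim_row (mat (d*k) (d*k) (\<lambda>(p,q). if p div k = q div k then Dc (p div k) (p mod k) (q mod k) else cc (p div k) (q div k)))"
      "q < dim_col (mat (d*k) (d*k) (\<lambda>(p,q). if p div k = q div k then Dc (p div k) (p mod k) (q mod k) else cc (p div k) (q div k)))"
    then have p: "p < d*k" and q: "q < d*k" by auto
    have "p div k < d" "q div k < d" using p q by (simp_all add: less_mult_imp_div_less)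
    moreover have "p mod k < k" "q mod k < k" using k0 by simp_all
    ultimately show "J $$ (p,q) = mat (d*k) (d*k) (\<lambda>(p,q). if p div k = q div k then Dc (p div k) (p mod k) (q mod k) else cc (p div k) (q div k)) $$ (p,q)"
      using p q by (simp add: J_def joined_union_mat_def adj_mat_def Dc_def cc_def)
  qed (auto simp: J_def joined_union_mat_def)
  define X where "X = mat d d (\<lambda>(i,j). if i = j then (of_nat r::complex) else of_nat k * cc i j)"
  have cpJ: "char_poly J = char_poly X * char_poly (bdiag d m F)"
    unfolding Jeq X_def m_def F_def by (rule joined_char_poly[OF assms(3)]) (use rows in auto)
  have cpZ: "char_poly (bdiag d m F) = (\<Prod>i<d. char_poly (C i))"
    unfolding C_def by (rule bdiag_char_poly)
  have cpG: "char_poly (map_mat complex_of_real (adj_mat k (Gs i))) = [:-of_nat r,1:] * char_poly (C i)"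
    if i: "i < d" for i
  proof -
    have eq: "map_mat complex_of_real (adj_mat k (Gs i)) = mat (1*k) (1*k) (\<lambda>(p,q). if p div k = q div k
       then (\<lambda>_. Dc i) (p div k) (p mod k) (q mod k) else (\<lambda>_ _. 0) (p div k) (q div k))"
      by (rule eq_matI) (auto simp: adj_mat_def Dc_def)
    have "char_poly (map_mat complex_of_real (adj_mat k (Gs i)))
      = char_poly (mat 1 1 (\<lambda>(i,j). if i = j then (of_nat r::complex) else of_nat k * 0))
        * char_poly (bdiag 1 (k-1) (\<lambda>_ a b. Dc i (a+1) (b+1) - Dc i 0 (b+1)))"
      unfolding eq by (rule joined_char_poly[OF assms(3)]) (use rows[OF i] in auto)
    also have "char_poly (bdiag 1 (k-1) (\<lambda>_ a b. Dc i (a+1) (b+1) - Dc i 0 (b+1))) = char_poly (C i)"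
      unfolding bdiag_char_poly C_def F_def m_def by simp
    also have "char_poly (mat 1 1 (\<lambda>(i,j). if i = j then (of_nat r::complex) else of_nat k * 0)) = [:-of_nat r,1:]"
      by (rule cp_1x1)
    finally show ?thesis .
  qed
  have Cc: "C i \<in> carrier_mat m m" for i by (simp add: C_def)
  have XC: "X \<in> carrier_mat d d" by (simp add: X_def)
  have enJ: "mat_energy (joined_union_mat d E k Gs) = en (char_poly X) + (\<Sum>i<d. en (char_poly (C i)))"
    unfolding mat_energy_en J_def[symmetric] cpJ cpZ
    using cp_nz[OF XC] cp_nz[OF Cc]
    by (simp add: en_mult en_prod prod_zero_iff)
  have enG: "graph_energy k (Gs i) = real r + en (char_poly (C i))" if "i < d" for i
  proof -
    have "en [:-of_nat r,1:] = real r"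
      using proots_linear_factor[of "- of_nat r :: complex"] by (simp add: en_def)
    moreover have "en ([:-of_nat r,1:] * char_poly (C i)) = en [:-of_nat r,1:] + en (char_poly (C i))"
      by (rule en_mult) (use cp_nz[OF Cc] in auto)
    ultimately show ?thesis
      unfolding graph_energy_def mat_energy_en cpG[OF that] by simp
  qed
  define Ac where "Ac = map_mat complex_of_real (adj_mat d E)"
  have Ac: "Ac \<in> carrier_mat d d" by (simp add: Ac_def adj_mat_def)
  obtain es where es: "char_poly Ac = (\<Prod>a\<leftarrow>es. [:-a,1:])" and les: "length es = d"
    using char_poly_factorized[OF Ac] by blast
  have XAc: "X = of_nat r \<cdot>\<^sub>m 1\<^sub>m d + of_nat k \<cdot>\<^sub>m Ac"
    by (rule eq_matI) (auto simp: X_def Ac_def adj_mat_def cc_def simp_E)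
  have enX: "en (char_poly X) = (\<Sum>a\<leftarrow>es. cmod (of_nat r + of_nat k * a))"
  proof -
    define f where "f a = (of_nat r + of_nat k * a :: complex)" for a
    have e1: "char_poly X = (\<Prod>b\<leftarrow>map f es. [:-b,1:])"
      unfolding XAc shift_char_poly(1)[OF Ac es] f_def by (simp only: map_map comp_def)
    have "en (char_poly X) = (\<Sum>b\<leftarrow>map f es. cmod b)" unfolding e1 en_lin ..
    also have "\<dots> = (\<Sum>a\<leftarrow>es. cmod (of_nat r + of_nat k * a))" by (simp only: map_map comp_def f_def)
    finally show ?thesis .
  qed
  have trace: "sum_list es = 0"
    unfolding shift_char_poly(2)[OF Ac es] by (simp add: Ac_def adj_mat_def simp_E)
  have real: "Im a = 0" if a: "a \<in> set es" for a
  proof (rule real_eig[OF Ac])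
    show "Im (Ac $$ (i, j)) = 0" if "i < d" "j < d" for i j using that by (simp add: Ac_def adj_mat_def)
    show "Ac $$ (i, j) = Ac $$ (j, i)" if "i < d" "j < d" for i j using that simp_E by (simp add: Ac_def adj_mat_def)
    have "a \<in># proots (char_poly Ac)" unfolding es proots_lin using a by simp
    then show "poly (char_poly Ac) a = 0" using cp_nz[OF Ac] by simp
  qed
  define ls where "ls = map Re es"
  have esls: "es = map complex_of_real ls"
    unfolding ls_def using real by (induction es) (auto simp: complex_eq_iff)
  have enAc: "graph_energy d E = (\<Sum>l\<leftarrow>ls. \<bar>l\<bar>)"
    unfolding graph_energy_def mat_energy_en Ac_def[symmetric] es en_lin esls by (simp add: comp_def)
  have enX': "en (char_poly X) = (\<Sum>l\<leftarrow>ls. \<bar>real r + real k * l\<bar>)"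
  proof -
    have pt: "cmod (of_nat r + of_nat k * complex_of_real x) = \<bar>real r + real k * x\<bar>" for x
    proof -
      have "(of_nat r + of_nat k * complex_of_real x) = complex_of_real (real r + real k * x)" by simp
      then show ?thesis by (simp only: norm_of_real)
    qed
    show ?thesis unfolding enX esls by (simp add: comp_def pt)
  qed
  have s0: "sum_list ls = 0"
  proof -
    have "complex_of_real (sum_list ls) = sum_list es" unfolding esls by (induction ls) auto
    then show ?thesis using trace by simp
  qed
  have lls: "length ls = d" using les by (simp add: ls_def)
  have key: "(\<Sum>l\<leftarrow>ls. \<bar>real r + real k * l\<bar>) \<ge> (\<Sum>l\<leftarrow>ls. \<bar>l\<bar>) + real (length ls) * real r"
    by (rule key_ineq) (use s0 assms(2) enAc lls assms(3) rk k0 in auto)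
  have "(\<Sum>i<d. graph_energy k (Gs i)) = real d * real r + (\<Sum>i<d. en (char_poly (C i)))"
    using enG by (simp add: sum.distrib)
  then show ?thesis using enJ enX' key enAc lls by simp
qed


end
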